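(* Let $X$ be a Banach space, $H$ a Hilbert space, $S\in\mathcal{L}(X,H)$, $F\subset X$ convex and $n\in\mathbb{N}_0$. Then $c_n(S,F)\le(n+1)\,b_n(S,F)$. If $F$ is additionally symmetric, then $c_n(S,F)\le\sqrt{n+1}\,b_n(S,F)$.
   Context: Gelfand numbers: $c_n(S,F)=\inf_{L_1,\dots,L_n\in X'}\sup\{\tfrac12\|S(f)-S(g)\|: f,g\in F,\ L_k(f)=L_k(g)\ \forall k\le n\}$. Bernstein numbers: $b_n(S,F)$ is the supremum of all $r>0$ for which there exist an $(n+1)$-dimensional linear subspace $V\subset X$ on which $S$ is injective and $g\in F$ with $g+\{v\in V:\|Sv\|\le r\}\subset F$ (supremum of the empty set is $0$). *)

theory Defs
  imports "HOL-Analysis.Analysis"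
begin

definition gelfand_number ::
  "nat \<Rightarrow> ('a::real_normed_vector \<Rightarrow> 'b::real_normed_vector) \<Rightarrow> 'a set \<Rightarrow> ereal" where
  "gelfand_number n S F =
     (INF L \<in> {L :: nat \<Rightarrow> 'a \<Rightarrow> real. \<forall>k<n. bounded_linear (L k)}.
        Sup {ereal (norm (S f - S g) / 2) | f g. f \<in> F \<and> g \<in> F \<and> (\<forall>k<n. L k f = L k g)})"

definition bernstein_radii ::
  "nat \<Rightarrow> ('a::real_normed_vector \<Rightarrow> 'b::real_normed_vector) \<Rightarrow> 'a set \<Rightarrow> real set" where
  "bernstein_radii n S F =
     {r. r > 0 \<and> (\<exists>V g. subspace V \<and> dim V = n + 1 \<and> inj_on S V \<and> g \<in> F \<and>
            (\<lambda>v. g + v) ` {v \<in> V. norm (S v) \<le> r} \<subseteq> F)}"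

definition bernstein_number ::
  "nat \<Rightarrow> ('a::real_normed_vector \<Rightarrow> 'b::real_normed_vector) \<Rightarrow> 'a set \<Rightarrow> ereal" where
  "bernstein_number n S F =
     (if bernstein_radii n S F = {} then 0 else Sup (ereal ` bernstein_radii n S F))"

end

theory Submission
  imports Defs
begin

lemma construct:
  fixes S :: "'a::real_normed_vector \<Rightarrow> 'b::real_inner"
  assumes bl: "bounded_linear S" and th: "ereal \<theta> < gelfand_number n S F"
  shows "m \<le> Suc n \<Longrightarrow> \<exists>f g. (\<forall>k<m. f k \<in> F \<and> g k \<in> F \<and> norm (S (f k - g k)) / 2 > \<theta>) \<and>
     (\<forall>j<m. \<forall>k<m. j \<noteq> k \<longrightarrow> inner (S (f j - g j)) (S (f k - g k)) = 0)"
proof (induction m)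
  case 0
  then show ?case by auto
next
  case (Suc m)
  then obtain f g where fg: "\<forall>k<m. f k \<in> F \<and> g k \<in> F \<and> norm (S (f k - g k)) / 2 > \<theta>"
    and orth: "\<forall>j<m. \<forall>k<m. j \<noteq> k \<longrightarrow> inner (S (f j - g j)) (S (f k - g k)) = 0"
    by auto
  have mn: "m \<le> n" using Suc.prems by simp
  define L where "L = (\<lambda>j. if j < m then (\<lambda>x. inner (S x) (S (f j - g j))) else (\<lambda>x. 0::real))"
  have Lbl: "\<forall>k<n. bounded_linear (L k)"
  proof (intro allI impI)
    fix k assume "k < n"
    show "bounded_linear (L k)"
    proof (cases "k < m")
      case True
      have "bounded_linear (\<lambda>x. inner (S x) (S (f k - g k)))"
        using bounded_linear_compose[OF bounded_linear_inner_left bl] by simp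
      then show ?thesis using True by (simp add: L_def)
    next
      case False
      then show ?thesis by (simp add: L_def bounded_linear_zero)
    qed
  qed
  have "gelfand_number n S F \<le> Sup {ereal (norm (S f - S g) / 2) | f g. f \<in> F \<and> g \<in> F \<and> (\<forall>k<n. L k f = L k g)}"
    unfolding gelfand_number_def by (rule INF_lower) (use Lbl in simp)
  with th have "ereal \<theta> < Sup {ereal (norm (S f - S g) / 2) | f g. f \<in> F \<and> g \<in> F \<and> (\<forall>k<n. L k f = L k g)}"
    by simp
  then obtain f' g' where f': "f' \<in> F" "g' \<in> F" "\<forall>k<n. L k f' = L k g'"
    and big: "ereal \<theta> < ereal (norm (S f' - S g') / 2)"
    by (auto simp: less_Sup_iff)
  have lin: "linear S" using bl bounded_linear.linear by blast
  have Sd: "S (f' - g') = S f' - S g'" using lin by (simp add: linear_diff)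
  have orth': "inner (S (f' - g')) (S (f j - g j)) = 0" if "j < m" for j
  proof -
    have "L j f' = L j g'" using f'(3) that mn by auto
    then have "inner (S f') (S (f j - g j)) = inner (S g') (S (f j - g j))"
      using that by (simp add: L_def)
    then show ?thesis by (simp add: Sd inner_diff_left)
  qed
  define f2 where "f2 = f(m := f')"
  define g2 where "g2 = g(m := g')"
  have A: "\<forall>k<Suc m. f2 k \<in> F \<and> g2 k \<in> F \<and> norm (S (f2 k - g2 k)) / 2 > \<theta>"
  proof (intro allI impI)
    fix k assume "k < Suc m"
    then show "f2 k \<in> F \<and> g2 k \<in> F \<and> norm (S (f2 k - g2 k)) / 2 > \<theta>"
      using fg f' big Sd by (cases "k = m") (auto simp: f2_def g2_def)
  qed
  have B: "\<forall>j<Suc m. \<forall>k<Suc m. j \<noteq> k \<longrightarrow> inner (S (f2 j - g2 j)) (S (f2 k - g2 k)) = 0"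
  proof (intro allI impI)
    fix j k assume jk: "j < Suc m" "k < Suc m" "j \<noteq> k"
    show "inner (S (f2 j - g2 j)) (S (f2 k - g2 k)) = 0"
    proof (cases "j = m")
      case True
      then show ?thesis using jk orth' by (auto simp: f2_def g2_def)
    next
      case False
      show ?thesis
      proof (cases "k = m")
        case True
        then show ?thesis using jk orth' False by (auto simp: f2_def g2_def inner_commute)
      next
        case False
        then show ?thesis using jk orth \<open>j \<noteq> m\<close> by (auto simp: f2_def g2_def)
      qed
    qed
  qed
  show ?case using A B by blast
qed

lemma convex_sum_le:
  fixes F :: "'a::real_vector set"
  assumes "convex F" "0 \<in> F" "finite I" "\<And>k. k \<in> I \<Longrightarrow> 0 \<le> \<mu> k" "sum \<mu> I \<le> 1"
    "\<And>k. k \<in> I \<Longrightarrow> y k \<in> F"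
  shows "(\<Sum>k\<in>I. \<mu> k *\<^sub>R y k) \<in> F"
proof (cases "sum \<mu> I = 0")
  case True
  then have "\<forall>k\<in>I. \<mu> k = 0" using assms sum_nonneg_eq_0_iff by blast
  then show ?thesis using assms(2) by simp
next
  case False
  define s where "s = sum \<mu> I"
  have s0: "s > 0" using False assms(4) sum_nonneg[of I \<mu>] unfolding s_def by force
  have z: "(\<Sum>k\<in>I. (\<mu> k / s) *\<^sub>R y k) \<in> F"
    apply (rule convex_sum[OF assms(3,1)])
    using s0 assms by (auto simp: s_def sum_divide_distrib[symmetric])
  have eq: "(\<Sum>k\<in>I. \<mu> k *\<^sub>R y k) = s *\<^sub>R (\<Sum>k\<in>I. (\<mu> k / s) *\<^sub>R y k) + (1 - s) *\<^sub>R 0"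
    using s0 by (simp add: scaleR_sum_right)
  have s1: "s \<le> 1" using assms(5) by (simp add: s_def)
  have "s *\<^sub>R (\<Sum>k\<in>I. (\<mu> k / s) *\<^sub>R y k) + (1 - s) *\<^sub>R 0 \<in> F"
    by (intro convexD[OF assms(1)]) (use z assms(2) s0 s1 in auto)
  then show ?thesis unfolding eq .
qed

lemma abs_bound:
  fixes a N :: real assumes "N > 0"
  shows "\<bar>a\<bar> \<le> N * a^2 + 1 / (4 * N)"
proof -
  have "0 \<le> (2 * N * \<bar>a\<bar> - 1)^2" by simp
  then have "4 * N * \<bar>a\<bar> \<le> 4 * N * (N * a^2 + 1 / (4 * N))"
    using assms by (simp add: power2_eq_square algebra_simps power2_abs)
  then show ?thesis using assms by simp
qed

lemma bern:
  fixes S :: "'a::real_normed_vector \<Rightarrow> 'b::real_inner"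
  assumes bl: "bounded_linear S" and cF: "convex F" and th: "\<theta> > 0"
    and fg: "\<forall>k<Suc n. f k \<in> F \<and> g k \<in> F \<and> norm (S (f k - g k)) / 2 > \<theta>"
    and orth: "\<forall>j<Suc n. \<forall>k<Suc n. j \<noteq> k \<longrightarrow> inner (S (f j - g j)) (S (f k - g k)) = 0"
  shows "ereal (\<theta> / real (n + 1)) \<le> bernstein_number n S F"
    and "(\<forall>x\<in>F. - x \<in> F) \<Longrightarrow> ereal (\<theta> / sqrt (real (n + 1))) \<le> bernstein_number n S F"
proof -
  define I where "I = {..n}"
  define d where "d = (\<lambda>k. f k - g k)"
  define w where "w = (\<lambda>k. S (d k))"
  define N where "N = real (n + 1)"
  have N0: "N > 0" by (simp add: N_def)
  have lin: "linear S" using bl bounded_linear.linear by blast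
  have finI: "finite I" by (simp add: I_def)
  have cardI: "card I = n + 1" by (simp add: I_def)
  have inI: "k \<in> I \<longleftrightarrow> k < Suc n" for k by (auto simp: I_def)
  have wbig: "norm (w k) > 2 * \<theta>" if "k \<in> I" for k
    using fg that by (auto simp: inI w_def d_def)
  have wpos: "norm (w k) > 0" if "k \<in> I" for k using wbig[OF that] th by linarith
  have worth: "inner (w j) (w k) = 0" if "j \<in> I" "k \<in> I" "j \<noteq> k" for j k
    using orth that by (auto simp: inI w_def d_def)
  have SS: "S (\<Sum>k\<in>I. a k *\<^sub>R d k) = (\<Sum>k\<in>I. a k *\<^sub>R w k)" for a
    using lin by (simp add: linear_sum linear_scale w_def)
  have C: "inner (S (\<Sum>k\<in>I. a k *\<^sub>R d k)) (w j) = a j * (norm (w j))^2" if "j \<in> I" for a j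
  proof -
    have "inner (S (\<Sum>k\<in>I. a k *\<^sub>R d k)) (w j) = (\<Sum>k\<in>I. a k * inner (w k) (w j))"
      by (simp add: SS inner_sum_left)
    also have "\<dots> = (\<Sum>k\<in>I. if k = j then a j * inner (w j) (w j) else 0)"
      by (rule sum.cong) (use worth that in auto)
    also have "\<dots> = a j * (norm (w j))^2" using finI that by (simp add: power2_norm_eq_inner)
    finally show ?thesis .
  qed
  have injd: "inj_on d I"
  proof (rule inj_onI)
    fix j k assume jk: "j \<in> I" "k \<in> I" "d j = d k"
    show "j = k"
    proof (rule ccontr)
      assume "j \<noteq> k"
      then have "inner (w j) (w j) = 0" using worth[OF jk(1,2)] jk(3) by (simp add: w_def)
      then show False using wpos[OF jk(1)] by simp
    qed
  qed
  define V where "V = span (d ` I)"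
  have rep: "\<exists>a. v = (\<Sum>k\<in>I. a k *\<^sub>R d k)" if "v \<in> V" for v
  proof -
    have "v \<in> range (\<lambda>u. \<Sum>x\<in>d ` I. u x *\<^sub>R x)"
      using that span_finite[of "d ` I"] finI by (simp add: V_def)
    then obtain u where "v = (\<Sum>x\<in>d ` I. u x *\<^sub>R x)" by auto
    also have "\<dots> = (\<Sum>k\<in>I. u (d k) *\<^sub>R d k)" using injd by (simp add: sum.reindex)
    finally have e: "v = (\<Sum>k\<in>I. u (d k) *\<^sub>R d k)" .
    show ?thesis by (rule exI[of _ "\<lambda>k. u (d k)"], rule e)
  qed
  have inV: "(\<Sum>k\<in>I. a k *\<^sub>R d k) \<in> V" for a
    unfolding V_def by (intro span_sum span_scale span_base) auto
  have coef0: "a j = 0" if "S (\<Sum>k\<in>I. a k *\<^sub>R d k) = 0" "j \<in> I" for a j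
    using C[OF that(2), of a] that wpos[OF that(2)] by simp
  have indep: "independent (d ` I)"
  proof
    assume "dependent (d ` I)"
    moreover have fd: "finite (d ` I)" using finI by simp
    ultimately obtain u v where uv: "v \<in> d ` I" "u v \<noteq> 0" "(\<Sum>x\<in>d ` I. u x *\<^sub>R x) = 0"
      unfolding dependent_finite[OF fd] by blast
    obtain j where j: "j \<in> I" "v = d j" using uv by auto
    have "(\<Sum>k\<in>I. u (d k) *\<^sub>R d k) = 0" using uv(3) injd by (simp add: sum.reindex)
    then have "u (d j) = 0" using coef0[of "\<lambda>k. u (d k)" j] j lin by (simp add: linear_0)
    then show False using uv j by simp
  qed
  have dimV: "dim V = n + 1"
    unfolding V_def using dim_span_eq_card_independent[OF indep] card_image[OF injd] cardI by simp
  have subV: "subspace V" unfolding V_def by simp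
  have injS: "inj_on S V"
  proof (rule inj_onI)
    fix x y assume xy: "x \<in> V" "y \<in> V" "S x = S y"
    have "x - y \<in> V" using xy subV by (simp add: subspace_diff)
    then obtain a where a: "x - y = (\<Sum>k\<in>I. a k *\<^sub>R d k)" using rep by blast
    have "S (x - y) = 0" using xy(3) lin by (simp add: linear_diff)
    then have "S (\<Sum>k\<in>I. a k *\<^sub>R d k) = 0" using a by simp
    then have "\<forall>k\<in>I. a k = 0" using coef0 by blast
    then have "x - y = 0" using a by simp
    then show "x = y" by simp
  qed
  have coefb: "\<bar>a j\<bar> * norm (w j) \<le> norm (S (\<Sum>k\<in>I. a k *\<^sub>R d k))" if "j \<in> I" for a j
  proof -
    have "\<bar>a j\<bar> * norm (w j) * norm (w j) = \<bar>inner (S (\<Sum>k\<in>I. a k *\<^sub>R d k)) (w j)\<bar>"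
      using C[OF that] by (simp add: abs_mult power2_eq_square)
    also have "\<dots> \<le> norm (S (\<Sum>k\<in>I. a k *\<^sub>R d k)) * norm (w j)"
      by (rule Cauchy_Schwarz_ineq2)
    finally show ?thesis using wpos[OF that] by simp
  qed
  have Bsup: "ereal r \<le> bernstein_number n S F" if "r \<in> bernstein_radii n S F" for r
    unfolding bernstein_number_def using that by (auto intro: Sup_upper)
  have segF: "g k + t *\<^sub>R d k \<in> F" if "k \<in> I" "0 \<le> t" "t \<le> 1" for k t
  proof -
    have "(1 - t) *\<^sub>R g k + t *\<^sub>R f k \<in> F"
      using cF fg that inI unfolding convex_def by auto
    moreover have "(1 - t) *\<^sub>R g k + t *\<^sub>R f k = g k + t *\<^sub>R d k"
      by (simp add: d_def algebra_simps)
    ultimately show ?thesis by simp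
  qed
  define g0 where "g0 = (\<Sum>k\<in>I. (1 / N) *\<^sub>R (g k + (1/2) *\<^sub>R d k))"
  have memb: "g0 + (\<Sum>k\<in>I. a k *\<^sub>R d k) \<in> F" if ab: "\<forall>k\<in>I. \<bar>a k\<bar> \<le> 1 / (2 * N)" for a
  proof -
    have "(\<Sum>k\<in>I. (1 / N) *\<^sub>R (g k + (1/2 + N * a k) *\<^sub>R d k)) \<in> F"
    proof (rule convex_sum[OF finI cF])
      show "sum (\<lambda>k. 1 / N) I = 1" using cardI N0 by (simp add: N_def)
      show "0 \<le> 1 / N" for i using N0 by simp
      fix k assume k: "k \<in> I"
      have "\<bar>N * a k\<bar> \<le> 1/2" using ab k N0 by (simp add: abs_mult field_simps)
      then show "g k + (1/2 + N * a k) *\<^sub>R d k \<in> F" using segF[OF k] by auto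
    qed
    moreover have "(\<Sum>k\<in>I. (1 / N) *\<^sub>R (g k + (1/2 + N * a k) *\<^sub>R d k))
        = g0 + (\<Sum>k\<in>I. a k *\<^sub>R d k)"
    proof -
      have "(\<Sum>k\<in>I. (1 / N) *\<^sub>R (g k + (1/2 + N * a k) *\<^sub>R d k))
          = (\<Sum>k\<in>I. (1 / N) *\<^sub>R (g k + (1/2) *\<^sub>R d k) + a k *\<^sub>R d k)"
        by (rule sum.cong) (use N0 in \<open>auto simp: algebra_simps\<close>)
      then show ?thesis by (simp add: g0_def sum.distrib)
    qed
    ultimately show ?thesis by simp
  qed
  have "\<theta> / N \<in> bernstein_radii n S F"
    unfolding bernstein_radii_def
  proof (intro CollectI conjI exI[of _ V] exI[of _ g0])
    show "\<theta> / N > 0" using th N0 by simp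
    show "g0 \<in> F" using memb[of "\<lambda>k. 0"] N0 by simp
    show "(+) g0 ` {v \<in> V. norm (S v) \<le> \<theta> / N} \<subseteq> F"
    proof
      fix x assume "x \<in> (+) g0 ` {v \<in> V. norm (S v) \<le> \<theta> / N}"
      then obtain v where v: "v \<in> V" "norm (S v) \<le> \<theta> / N" "x = g0 + v" by auto
      obtain a where a: "v = (\<Sum>k\<in>I. a k *\<^sub>R d k)" using rep[OF v(1)] by blast
      have "\<bar>a k\<bar> \<le> 1 / (2 * N)" if k: "k \<in> I" for k
      proof -
        have "\<bar>a k\<bar> * (2 * \<theta>) \<le> \<bar>a k\<bar> * norm (w k)"
          using wbig[OF k] by (intro mult_left_mono) auto
        also have "\<dots> \<le> \<theta> / N" using coefb[OF k, of a] v(2) a by simp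
        finally have "\<bar>a k\<bar> * (2 * \<theta>) \<le> \<theta> / N" .
        then show ?thesis using th N0 by (simp add: field_simps)
      qed
      then show "x \<in> F" using memb v a by auto
    qed
  qed (use subV dimV injS in auto)
  then show "ereal (\<theta> / real (n + 1)) \<le> bernstein_number n S F" using Bsup N_def by simp
  assume sym: "\<forall>x\<in>F. - x \<in> F"
  have zF: "0 \<in> F"
  proof -
    have f0: "f 0 \<in> F" using fg by auto
    have "(1/2) *\<^sub>R f 0 + (1/2) *\<^sub>R (- f 0) \<in> F"
      by (rule convexD[OF cF]) (use f0 sym in auto)
    then show ?thesis by (simp add: algebra_simps)
  qed
  have halfF: "(1/2) *\<^sub>R d k \<in> F" if "k \<in> I" for k
  proof -
    have fk: "f k \<in> F" "g k \<in> F" using fg that inI by auto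
    have "(1/2) *\<^sub>R f k + (1/2) *\<^sub>R (- g k) \<in> F"
      by (rule convexD[OF cF]) (use fk sym in auto)
    then show ?thesis by (simp add: d_def algebra_simps)
  qed
  have pyth: "(norm (S (\<Sum>k\<in>I. a k *\<^sub>R d k)))^2 = (\<Sum>k\<in>I. (a k)^2 * (norm (w k))^2)" for a
  proof -
    have "(norm (S (\<Sum>k\<in>I. a k *\<^sub>R d k)))^2 = inner (S (\<Sum>k\<in>I. a k *\<^sub>R d k)) (\<Sum>k\<in>I. a k *\<^sub>R w k)"
      by (simp add: power2_norm_eq_inner SS)
    also have "\<dots> = (\<Sum>k\<in>I. a k * inner (S (\<Sum>k\<in>I. a k *\<^sub>R d k)) (w k))"
      by (simp add: inner_sum_right)
    also have "\<dots> = (\<Sum>k\<in>I. (a k)^2 * (norm (w k))^2)"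
      by (rule sum.cong) (auto simp: C power2_eq_square)
    finally show ?thesis .
  qed
  have sN: "sqrt N > 0" using N0 by simp
  have "\<theta> / sqrt N \<in> bernstein_radii n S F"
    unfolding bernstein_radii_def
  proof (intro CollectI conjI exI[of _ V] exI[of _ 0])
    show "\<theta> / sqrt N > 0" using th sN by simp
    show "(0::'a) \<in> F" by (rule zF)
    show "(+) 0 ` {v \<in> V. norm (S v) \<le> \<theta> / sqrt N} \<subseteq> F"
    proof
      fix x assume "x \<in> (+) 0 ` {v \<in> V. norm (S v) \<le> \<theta> / sqrt N}"
      then obtain v where v: "v \<in> V" "norm (S v) \<le> \<theta> / sqrt N" "x = v" by auto
      obtain a where a: "v = (\<Sum>k\<in>I. a k *\<^sub>R d k)" using rep[OF v(1)] by blast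
      have "(\<Sum>k\<in>I. (a k)^2) * (2 * \<theta>)^2 = (\<Sum>k\<in>I. (a k)^2 * (2 * \<theta>)^2)"
        by (simp add: sum_distrib_right)
      also have "\<dots> \<le> (\<Sum>k\<in>I. (a k)^2 * (norm (w k))^2)"
        using wbig th by (intro sum_mono mult_left_mono power_mono) (auto intro: less_imp_le)
      also have "\<dots> = (norm (S v))^2" using pyth a by simp
      also have "\<dots> \<le> (\<theta> / sqrt N)^2" using v(2) by (intro power_mono) auto
      also have "\<dots> = \<theta>^2 / N" using N0 by (simp add: power_divide)
      finally have "(\<Sum>k\<in>I. (a k)^2) * (4 * \<theta>^2) \<le> \<theta>^2 / N" by (simp add: power_mult_distrib)
      then have "(\<Sum>k\<in>I. (a k)^2) \<le> (\<theta>^2 / N) / (4 * \<theta>^2)"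
        using th by (subst pos_le_divide_eq) auto
      also have "(\<theta>^2 / N) / (4 * \<theta>^2) = 1 / (4 * N)" using th N0 by simp
      finally have sq: "(\<Sum>k\<in>I. (a k)^2) \<le> 1 / (4 * N)" .
      have "(\<Sum>k\<in>I. \<bar>a k\<bar>) \<le> (\<Sum>k\<in>I. N * (a k)^2 + 1 / (4 * N))"
        using abs_bound[OF N0] by (intro sum_mono) auto
      also have "\<dots> = N * (\<Sum>k\<in>I. (a k)^2) + N * (1 / (4 * N))"
        using cardI by (simp add: sum.distrib sum_distrib_left N_def)
      also have "\<dots> \<le> N * (1 / (4 * N)) + N * (1 / (4 * N))"
        using sq N0 by (intro add_right_mono mult_left_mono) auto
      also have "\<dots> = 1/2" using N0 by simp
      finally have sabs: "(\<Sum>k\<in>I. \<bar>a k\<bar>) \<le> 1/2" .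
      have "(\<Sum>k\<in>I. (2 * \<bar>a k\<bar>) *\<^sub>R (sgn (a k) *\<^sub>R ((1/2) *\<^sub>R d k))) \<in> F"
      proof (rule convex_sum_le[OF cF zF finI])
        show "sum (\<lambda>k. 2 * \<bar>a k\<bar>) I \<le> 1" using sabs by (simp add: sum_distrib_left[symmetric])
        show "0 \<le> 2 * \<bar>a k\<bar>" for k by simp
        fix k assume k: "k \<in> I"
        have "a k > 0 \<or> a k = 0 \<or> a k < 0" by auto
        then show "sgn (a k) *\<^sub>R ((1/2) *\<^sub>R d k) \<in> F"
          using halfF[OF k] sym zF by auto
      qed
      moreover have "(\<Sum>k\<in>I. (2 * \<bar>a k\<bar>) *\<^sub>R (sgn (a k) *\<^sub>R ((1/2) *\<^sub>R d k))) = v"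
        unfolding a by (rule sum.cong) (auto simp: sgn_if)
      ultimately show "x \<in> F" using v by simp
    qed
  qed (use subV dimV injS in auto)
  then show "ereal (\<theta> / sqrt (real (n + 1))) \<le> bernstein_number n S F" using Bsup N_def by simp
qed

theorem theorem3p5:
  fixes S :: "'a::banach \<Rightarrow> 'b::{real_inner, complete_space}"
    and F :: "'a set" and n :: nat
  assumes "bounded_linear S"
    and "convex F"
  shows "gelfand_number n S F \<le> ereal (real (n + 1)) * bernstein_number n S F \<and>
         ((\<forall>x\<in>F. - x \<in> F) \<longrightarrow>
           gelfand_number n S F \<le> ereal (sqrt (real (n + 1))) * bernstein_number n S F)"
proof -
  have bnn: "0 \<le> bernstein_number n S F"
  proof (cases "bernstein_radii n S F = {}")
    case True then show ?thesis by (simp add: bernstein_number_def)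
  next
    case False
    then obtain r where r: "r \<in> bernstein_radii n S F" by auto
    then have "r > 0" by (simp add: bernstein_radii_def)
    moreover have "ereal r \<le> Sup (ereal ` bernstein_radii n S F)" using r by (auto intro: Sup_upper)
    ultimately show ?thesis using False unfolding bernstein_number_def
      by (metis (full_types) ereal_less_eq(5) less_imp_le order_trans)
  qed
  have key: "\<exists>f g. (\<forall>k<Suc n. f k \<in> F \<and> g k \<in> F \<and> norm (S (f k - g k)) / 2 > \<theta>) \<and>
     (\<forall>j<Suc n. \<forall>k<Suc n. j \<noteq> k \<longrightarrow> inner (S (f j - g j)) (S (f k - g k)) = 0)"
    if "ereal \<theta> < gelfand_number n S F" for \<theta>
    using construct[OF assms(1) that, of "Suc n"] by simp
  have gen: "gelfand_number n S F \<le> ereal c * bernstein_number n S F"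
    if c0: "c > 0" and bnd: "\<And>\<theta> f g. \<theta> > 0 \<Longrightarrow> (\<forall>k<Suc n. f k \<in> F \<and> g k \<in> F \<and> norm (S (f k - g k)) / 2 > \<theta>) \<Longrightarrow>
     (\<forall>j<Suc n. \<forall>k<Suc n. j \<noteq> k \<longrightarrow> inner (S (f j - g j)) (S (f k - g k)) = 0) \<Longrightarrow>
     ereal (\<theta> / c) \<le> bernstein_number n S F" for c
  proof (rule dense_le)
    fix y assume y: "y < gelfand_number n S F"
    show "y \<le> ereal c * bernstein_number n S F"
    proof (cases "y \<le> 0")
      case True
      have "0 \<le> ereal c * bernstein_number n S F" using bnn c0 by simp
      then show ?thesis using True by simp
    next
      case False
      then obtain \<theta> where th: "y = ereal \<theta>" "\<theta> > 0" using y
        by (cases y) auto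
      obtain f g where "(\<forall>k<Suc n. f k \<in> F \<and> g k \<in> F \<and> norm (S (f k - g k)) / 2 > \<theta>) \<and>
         (\<forall>j<Suc n. \<forall>k<Suc n. j \<noteq> k \<longrightarrow> inner (S (f j - g j)) (S (f k - g k)) = 0)"
        using key y th by blast
      then have b: "ereal (\<theta> / c) \<le> bernstein_number n S F" using bnd th(2) by blast
      have "ereal c * ereal (\<theta> / c) \<le> ereal c * bernstein_number n S F"
        using b c0 by (intro ereal_mult_left_mono) auto
      then show ?thesis using th c0 by simp
    qed
  qed
  show ?thesis
  proof (intro conjI impI)
    show "gelfand_number n S F \<le> ereal (real (n + 1)) * bernstein_number n S F"
      by (rule gen) (use bern(1)[OF assms(1,2)] in auto)
    assume sym: "\<forall>x\<in>F. - x \<in> F"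
    show "gelfand_number n S F \<le> ereal (sqrt (real (n + 1))) * bernstein_number n S F"
      by (rule gen) (use bern(2)[OF assms(1,2) _ _ _ sym] in auto)
  qed
qed

end
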